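(* Let $q>3$ and $n\ge 1$. Suppose there exists a local permutation polynomial $f\in\mathbb{F}_q[x_1,\dots,x_n]$ of degree $n(q-2)$. Then, for every $1\le m\le n$, there exists a local permutation polynomial in $\mathbb{F}_q[x_1,\dots,x_m]$ of degree $m(q-2)$.
   Context: $\mathbb{F}_q$ is the finite field with $q$ elements. A polynomial $f\in\mathbb{F}_q[x_1,\dots,x_n]$ is a local permutation polynomial (LPP) if, for each $i$ and each choice of the other coordinates $(a_j)_{j\ne i}\in\mathbb{F}_q^{n-1}$, the univariate polynomial obtained by fixing $x_j=a_j$ for $j\ne i$ induces a bijection of $\mathbb{F}_q$. Polynomials are reduced (degree $<q$ in each variable), and degree means total degree. For $q>3$ any LPP in $n$ variables has degree at most $n(q-2)$, which is the "maximum degree". *)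

theory Defs
  imports Main
begin

text \<open>Reduced polynomials in n variables x_0..x_(n-1) over a finite field 'a with q = card (UNIV :: 'a set)
elements are represented by their coefficient function on exponent vectors
(nat => nat), supported on exponent vectors e with e i < q for i < n and e i = 0 for i >= n.\<close>

definition red_exps :: "nat \<Rightarrow> nat \<Rightarrow> (nat \<Rightarrow> nat) set" where
  "red_exps q n = {e. (\<forall>i<n. e i < q) \<and> (\<forall>i\<ge>n. e i = 0)}"

definition is_reduced_poly :: "nat \<Rightarrow> ((nat \<Rightarrow> nat) \<Rightarrow> 'a::{field,finite}) \<Rightarrow> bool" where
  "is_reduced_poly n c \<longleftrightarrow> (\<forall>e. c e \<noteq> 0 \<longrightarrow> e \<in> red_exps (card (UNIV :: 'a set)) n)"

definition mpeval :: "nat \<Rightarrow> ((nat \<Rightarrow> nat) \<Rightarrow> 'a::{field,finite}) \<Rightarrow> (nat \<Rightarrow> 'a) \<Rightarrow> 'a" where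
  "mpeval n c x = (\<Sum>e\<in>red_exps (card (UNIV :: 'a set)) n. c e * (\<Prod>i<n. x i ^ e i))"

text \<open>Total degree (the zero polynomial gets degree 0 by convention).\<close>
definition tdeg :: "nat \<Rightarrow> ((nat \<Rightarrow> nat) \<Rightarrow> 'a::{field,finite}) \<Rightarrow> nat" where
  "tdeg n c = Max (insert 0 {(\<Sum>i<n. e i) | e. e \<in> red_exps (card (UNIV :: 'a set)) n \<and> c e \<noteq> 0})"

definition is_LPP :: "nat \<Rightarrow> ((nat \<Rightarrow> nat) \<Rightarrow> 'a::{field,finite}) \<Rightarrow> bool" where
  "is_LPP n c \<longleftrightarrow> is_reduced_poly n c \<and>
     (\<forall>i<n. \<forall>x::nat \<Rightarrow> 'a. bij (\<lambda>t. mpeval n c (x(i := t))))"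

end

theory Submission imports Defs "HOL-Computational_Algebra.Polynomial" "HOL-Library.FuncSet" begin


lemma uv_zero:
  fixes a :: "nat \<Rightarrow> 'a::{field,finite}"
  assumes z: "\<And>t. (\<Sum>k\<le>d. a k * t ^ k) = 0" and d: "d < card (UNIV::'a set)" and k: "k \<le> d"
  shows "a k = 0"
proof -
  define p where "p = (\<Sum>i\<le>d. monom (a i) i)"
  have ev: "poly p t = 0" for t using z[of t] by (simp add: p_def poly_sum poly_monom)
  have "p = 0"
  proof (rule ccontr)
    assume "p \<noteq> 0"
    hence "card {x. poly p x = 0} \<le> degree p" by (rule card_poly_roots_bound)
    moreover have "degree p \<le> d" unfolding p_def
      by (rule degree_sum_le) (auto intro: order.trans[OF degree_monom_le])
    moreover have "{x. poly p x = 0} = UNIV" using ev by auto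
    ultimately show False using d by simp
  qed
  hence "coeff p k = 0" by simp
  thus ?thesis using coeff_sum_monom[OF k, of a] by (simp add: p_def)
qed

lemma exists_not_root:
  fixes s :: nat
  assumes "0 < s" "s < card (UNIV::'a::{field,finite} set) - 1"
  shows "\<exists>c::'a. c \<noteq> 0 \<and> c ^ s \<noteq> 1"
proof (rule ccontr)
  assume "\<not> ?thesis"
  hence h: "\<And>c::'a. c \<noteq> 0 \<Longrightarrow> c ^ s = 1" by blast
  define p :: "'a poly" where "p = monom 1 s - 1"
  have pnz: "p \<noteq> 0"
  proof
    assume "p = 0" hence "coeff p s = 0" by simp
    thus False using assms by (simp add: p_def coeff_monom)
  qed
  have "degree p \<le> s" unfolding p_def
    by (rule degree_diff_le) (auto intro: degree_monom_le)
  moreover have "UNIV - {0} \<subseteq> {x. poly p x = 0}" using h by (auto simp: p_def poly_monom)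
  hence "card (UNIV - {0::'a}) \<le> card {x. poly p x = 0}"
    by (intro card_mono poly_roots_finite pnz)
  moreover have "card (UNIV - {0::'a}) = card (UNIV::'a set) - 1" by (simp add: card_Diff_singleton)
  ultimately show False using card_poly_roots_bound[OF pnz] assms by linarith
qed

lemma char_card: "of_nat (card (UNIV::'a::{field,finite} set)) = (0::'a)"
proof -
  have "(\<Sum>t::'a\<in>UNIV. t + 1) = (\<Sum>t\<in>UNIV. t)"
    by (rule sum.reindex_bij_betw) (auto simp: bij_betw_def inj_on_def intro!: image_eqI[where x="_ - 1"])
  thus ?thesis by (simp add: sum.distrib)
qed

lemma fermat_field:
  fixes t :: "'a::{field,finite}"
  assumes "t \<noteq> 0" shows "t ^ (card (UNIV::'a set) - 1) = 1"
proof -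
  let ?A = "UNIV - {0::'a}"
  have "(\<Prod>u\<in>?A. t * u) = (\<Prod>u\<in>?A. u)"
    by (rule prod.reindex_bij_betw) (use assms in \<open>auto simp: bij_betw_def inj_on_def intro!: image_eqI[where x="_ / t"]\<close>)
  moreover have "(\<Prod>u\<in>?A. t * u) = t ^ card ?A * (\<Prod>u\<in>?A. u)" by (simp add: prod.distrib)
  moreover have "(\<Prod>u\<in>?A. u) \<noteq> 0" by simp
  moreover have "card ?A = card (UNIV::'a set) - 1" by (simp add: card_Diff_singleton)
  ultimately show ?thesis by simp
qed

lemma psum_small:
  assumes "s < card (UNIV::'a::{field,finite} set) - 1"
  shows "(\<Sum>t::'a\<in>UNIV. t ^ s) = 0"
proof (cases "s = 0")
  case True thus ?thesis using char_card by simp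
next
  case False
  then obtain c :: 'a where c: "c \<noteq> 0" "c ^ s \<noteq> 1" using exists_not_root assms by blast
  have "(\<Sum>t::'a\<in>UNIV. (c * t) ^ s) = (\<Sum>t\<in>UNIV. t ^ s)"
    by (rule sum.reindex_bij_betw) (use c in \<open>auto simp: bij_betw_def inj_on_def intro!: image_eqI[where x="_ / c"]\<close>)
  hence "c ^ s * (\<Sum>t::'a\<in>UNIV. t ^ s) = 1 * (\<Sum>t\<in>UNIV. t ^ s)"
    by (simp add: power_mult_distrib sum_distrib_left)
  thus ?thesis using c(2) by (metis mult_cancel_right)
qed

lemma psum_top:
  assumes "card (UNIV::'a::{field,finite} set) > 1"
  shows "(\<Sum>t::'a\<in>UNIV. t ^ (card (UNIV::'a set) - 1)) = -1"
proof -
  have "(\<Sum>t::'a\<in>UNIV. t ^ (card (UNIV::'a set) - 1)) = (\<Sum>t::'a\<in>UNIV. if t = 0 then 0 else 1)"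
    proof (intro sum.cong refl)
    fix t :: 'a show "t ^ (card (UNIV::'a set) - 1) = (if t = 0 then 0 else 1)"
      using fermat_field[of t] assms by (cases "t = 0") auto
  qed
  also have "\<dots> = (\<Sum>t::'a\<in>UNIV - {0}. 1)"
    by (rule sum.mono_neutral_cong_right) auto
  also have "\<dots> = of_nat (card (UNIV - {0::'a}))" by simp
  also have "\<dots> = of_nat (card (UNIV::'a set)) - 1" using assms by (simp add: card_Diff_singleton of_nat_diff)
  finally show ?thesis by (simp add: char_card)
qed


lemma uv_zero':
  fixes a :: "nat \<Rightarrow> 'a::{field,finite}"
  assumes z: "\<And>t. (\<Sum>k<card (UNIV::'a set). a k * t ^ k) = 0" and k: "k < card (UNIV::'a set)"
  shows "a k = 0"
proof -
  let ?q = "card (UNIV::'a set)"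
  have q: "?q > 0" by (simp add: card_gt_0_iff)
  have e: "{..<?q} = {..?q - 1}" using q by auto
  show ?thesis
    by (rule uv_zero[of a "?q - 1"]) (use z e k in auto)
qed

lemma red_exps_finite: "finite (red_exps q n)"
proof -
  have "red_exps q n \<subseteq> (\<lambda>f i. if i < n then f i else 0) ` ({..<n} \<rightarrow>\<^sub>E {..<q})"
  proof
    fix e assume e: "e \<in> red_exps q n"
    show "e \<in> (\<lambda>f i. if i < n then f i else 0) ` ({..<n} \<rightarrow>\<^sub>E {..<q})"
      by (rule image_eqI[where x="restrict e {..<n}"]) (use e in \<open>auto simp: red_exps_def fun_eq_iff\<close>)
  qed
  moreover have "finite ((\<lambda>f i. if i < n then f i else 0) ` ({..<n} \<rightarrow>\<^sub>E {..<q}))"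
    by (intro finite_imageI finite_PiE) auto
  ultimately show ?thesis by (rule finite_subset)
qed

definition zx :: "nat \<Rightarrow> nat \<Rightarrow> nat \<Rightarrow> (nat \<Rightarrow> nat) set" where
  "zx q n i = {e \<in> red_exps q n. e i = 0}"

definition sl :: "nat \<Rightarrow> ((nat \<Rightarrow> nat) \<Rightarrow> 'a::{field,finite}) \<Rightarrow> nat \<Rightarrow> nat \<Rightarrow> (nat \<Rightarrow> nat) \<Rightarrow> 'a" where
  "sl n c i k e = (if e \<in> red_exps (card (UNIV::'a set)) n \<and> e i = 0 then c (e(i:=k)) else 0)"

lemma red_split:
  assumes "i < n"
  shows "red_exps q n = (\<lambda>(e,k). e(i:=k)) ` (zx q n i \<times> {..<q})"
proof
  show "red_exps q n \<subseteq> (\<lambda>(e,k). e(i:=k)) ` (zx q n i \<times> {..<q})"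
  proof
    fix e assume e: "e \<in> red_exps q n"
    show "e \<in> (\<lambda>(e,k). e(i:=k)) ` (zx q n i \<times> {..<q})"
      by (rule image_eqI[where x="(e(i:=0), e i)"]) (use e assms in \<open>auto simp: red_exps_def zx_def\<close>)
  qed
  show "(\<lambda>(e,k). e(i:=k)) ` (zx q n i \<times> {..<q}) \<subseteq> red_exps q n"
    using assms by (auto simp: red_exps_def zx_def)
qed

lemma red_split_inj: "inj_on (\<lambda>(e,k). e(i:=k)) (zx q n i \<times> {..<q})"
proof (rule inj_onI, clarify)
  fix e k e' k' assume a: "e \<in> zx q n i" "e' \<in> zx q n i" "e(i := k) = e'(i := k')"
  have "k = k'" using fun_cong[OF a(3), of i] by simp
  moreover have "e = e'"
  proof
    fix j show "e j = e' j"
      using fun_cong[OF a(3), of j] a(1,2) by (cases "j = i") (auto simp: zx_def)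
  qed
  ultimately show "e = e' \<and> k = k'" by simp
qed

lemma prod_upd:
  fixes x :: "nat \<Rightarrow> 'a::comm_ring_1"
  assumes "i < n" "e i = 0"
  shows "(\<Prod>j<n. (x(i:=t)) j ^ (e(i:=k)) j) = t ^ k * (\<Prod>j<n. x j ^ e j)"
proof -
  have fin: "finite {..<n}" and ii: "i \<in> {..<n}" using assms by auto
  have "(\<Prod>j<n. (x(i:=t)) j ^ (e(i:=k)) j) = t ^ k * (\<Prod>j\<in>{..<n}-{i}. (x(i:=t)) j ^ (e(i:=k)) j)"
    using prod.remove[OF fin ii, of "\<lambda>j. (x(i:=t)) j ^ (e(i:=k)) j"] by simp
  also have "(\<Prod>j\<in>{..<n}-{i}. (x(i:=t)) j ^ (e(i:=k)) j) = (\<Prod>j\<in>{..<n}-{i}. x j ^ e j)"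
    by (rule prod.cong) auto
  also have "\<dots> = (\<Prod>j<n. x j ^ e j)"
    using prod.remove[OF fin ii, of "\<lambda>j. x j ^ e j"] assms by simp
  finally show ?thesis .
qed

lemma decomp:
  fixes c :: "(nat \<Rightarrow> nat) \<Rightarrow> 'a::{field,finite}"
  assumes i: "i < n"
  shows "mpeval n c (x(i:=t)) = (\<Sum>k<card (UNIV::'a set). t ^ k * mpeval n (sl n c i k) x)"
proof -
  let ?q = "card (UNIV::'a set)"
  let ?P = "\<lambda>y e. \<Prod>j<n. y j ^ e j"
  let ?Z = "zx ?q n i"
  have finZ: "finite ?Z" using red_exps_finite[of ?q n] by (simp add: zx_def)
  have "mpeval n c (x(i:=t)) = (\<Sum>e\<in>red_exps ?q n. c e * ?P (x(i:=t)) e)"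
    by (simp add: mpeval_def)
  also have "\<dots> = (\<Sum>p\<in>?Z \<times> {..<?q}. c ((fst p)(i:=snd p)) * ?P (x(i:=t)) ((fst p)(i:=snd p)))"
    unfolding red_split[OF i, of ?q] by (subst sum.reindex[OF red_split_inj]) (simp add: case_prod_beta)
  also have "\<dots> = (\<Sum>p\<in>?Z \<times> {..<?q}. c ((fst p)(i:=snd p)) * (t ^ snd p * ?P x (fst p)))"
  proof (rule sum.cong[OF refl])
    fix p assume "p \<in> ?Z \<times> {..<?q}"
    then obtain e k where p: "p = (e, k)" and e0: "e i = 0" by (auto simp: zx_def)
    show "c ((fst p)(i:=snd p)) * ?P (x(i:=t)) ((fst p)(i:=snd p)) = c ((fst p)(i:=snd p)) * (t ^ snd p * ?P x (fst p))"
      using prod_upd[of i n e x t k, OF i e0] p by simp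
  qed
  also have "\<dots> = (\<Sum>e\<in>?Z. \<Sum>k<?q. c (e(i:=k)) * (t ^ k * ?P x e))"
    by (subst sum.cartesian_product) (simp add: case_prod_unfold)
  also have "\<dots> = (\<Sum>k<?q. \<Sum>e\<in>?Z. c (e(i:=k)) * (t ^ k * ?P x e))"
    by (rule sum.swap)
  also have "\<dots> = (\<Sum>k<?q. t ^ k * mpeval n (sl n c i k) x)"
  proof (rule sum.cong[OF refl])
    fix k
    have "mpeval n (sl n c i k) x = (\<Sum>e\<in>red_exps ?q n. sl n c i k e * ?P x e)" by (simp add: mpeval_def)
    also have "\<dots> = (\<Sum>e\<in>?Z. c (e(i:=k)) * ?P x e)"
      by (rule sum.mono_neutral_cong_right) (auto simp: red_exps_finite zx_def sl_def)
    finally show "(\<Sum>e\<in>?Z. c (e(i:=k)) * (t ^ k * ?P x e)) = t ^ k * mpeval n (sl n c i k) x"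
      by (simp add: sum_distrib_left algebra_simps)
  qed
  finally show ?thesis .
qed

lemma mpeval_Suc:
  fixes c :: "(nat \<Rightarrow> nat) \<Rightarrow> 'a::{field,finite}"
  assumes "is_reduced_poly m c"
  shows "mpeval (Suc m) c x = mpeval m c x"
proof -
  let ?q = "card (UNIV::'a set)"
  have sub: "red_exps ?q m \<subseteq> red_exps ?q (Suc m)" by (auto simp: red_exps_def less_Suc_eq card_gt_0_iff)
  have "mpeval (Suc m) c x = (\<Sum>e\<in>red_exps ?q m. c e * (\<Prod>j<Suc m. x j ^ e j))"
    unfolding mpeval_def
    by (rule sum.mono_neutral_right) (use assms sub in \<open>auto simp: red_exps_finite is_reduced_poly_def\<close>)
  also have "\<dots> = mpeval m c x" unfolding mpeval_def
    by (rule sum.cong) (auto simp: red_exps_def)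
  finally show ?thesis .
qed

lemma sl_reduced: "is_reduced_poly n (sl n c i k)"
  by (auto simp: is_reduced_poly_def sl_def split: if_splits)

lemma sl_reduced_Suc:
  fixes c :: "(nat \<Rightarrow> nat) \<Rightarrow> 'a::{field,finite}"
  shows "is_reduced_poly m (sl (Suc m) c m k)"
  by (auto simp: is_reduced_poly_def sl_def red_exps_def less_Suc_eq split: if_splits)
     (metis Suc_leI le_neq_implies_less)

lemma uniq:
  fixes c :: "(nat \<Rightarrow> nat) \<Rightarrow> 'a::{field,finite}"
  assumes "is_reduced_poly n c" "\<And>x. mpeval n c x = 0"
  shows "c e = 0"
  using assms
proof (induction n arbitrary: c e)
  case 0
  have "red_exps (card (UNIV::'a set)) 0 = {\<lambda>_. 0}" by (auto simp: red_exps_def)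
  hence "mpeval 0 c x = c (\<lambda>_. 0)" for x by (simp add: mpeval_def)
  hence "c (\<lambda>_. 0) = 0" using 0 by simp
  moreover have "c e \<noteq> 0 \<Longrightarrow> e = (\<lambda>_. 0)" using 0(1)
    by (auto simp: is_reduced_poly_def red_exps_def)
  ultimately show ?case by blast
next
  case (Suc m)
  let ?q = "card (UNIV::'a set)"
  have Mz: "mpeval m (sl (Suc m) c m k) x = 0" if k: "k < ?q" for k x
  proof -
    have "(\<Sum>k<?q. mpeval (Suc m) (sl (Suc m) c m k) x * t ^ k) = 0" for t
    proof -
      have "mpeval (Suc m) c (x(m:=t)) = (\<Sum>k<?q. t ^ k * mpeval (Suc m) (sl (Suc m) c m k) x)"
        by (rule decomp) simp
      thus ?thesis using Suc.prems(2)[of "x(m:=t)"] by (simp add: mult.commute)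
    qed
    from uv_zero'[of "\<lambda>k. mpeval (Suc m) (sl (Suc m) c m k) x", OF this k]
    show ?thesis using mpeval_Suc[OF sl_reduced_Suc[of m c k]] by simp
  qed
  have slz: "sl (Suc m) c m k e' = 0" if "k < ?q" for k e'
    by (rule Suc.IH[OF sl_reduced_Suc]) (use Mz that in auto)
  show ?case
  proof (rule ccontr)
    assume ne: "c e \<noteq> 0"
    hence eR: "e \<in> red_exps ?q (Suc m)" using Suc.prems(1) by (auto simp: is_reduced_poly_def)
    hence "e m < ?q" by (auto simp: red_exps_def)
    have "e(m:=0) \<in> red_exps ?q (Suc m)" using eR by (auto simp: red_exps_def card_gt_0_iff)
    with slz[OF \<open>e m < ?q\<close>, of "e(m:=0)"] ne show False
      by (simp add: sl_def)
  qed
qed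



lemma mpeval_lin:
  fixes c :: "nat \<Rightarrow> (nat \<Rightarrow> nat) \<Rightarrow> 'a::{field,finite}"
  shows "mpeval n (\<lambda>e. \<Sum>k\<in>K. w k * c k e) x = (\<Sum>k\<in>K. w k * mpeval n (c k) x)"
  unfolding mpeval_def
  by (simp add: sum_distrib_left sum_distrib_right mult.assoc sum.swap[of _ K])

lemma bound:
  fixes f :: "(nat \<Rightarrow> nat) \<Rightarrow> 'a::{field,finite}"
  assumes q: "card (UNIV::'a set) > 2" and L: "is_LPP n f" and i: "i < n" and ne: "f e \<noteq> 0"
  shows "e i < card (UNIV::'a set) - 1"
proof -
  let ?q = "card (UNIV::'a set)"
  let ?M = "\<lambda>k x. mpeval n (sl n f i k) x"
  have Mz: "?M (?q - 1) x = 0" for x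
  proof -
    have bij: "bij (\<lambda>t. mpeval n f (x(i:=t)))" using L i by (simp add: is_LPP_def)
    have "(\<Sum>t\<in>UNIV. mpeval n f (x(i:=t))) = (\<Sum>t::'a\<in>UNIV. t)"
      by (rule sum.reindex_bij_betw[OF bij])
    also have "\<dots> = (\<Sum>t::'a\<in>UNIV. t ^ 1)" by simp
    also have "\<dots> = 0" by (rule psum_small) (use q in simp)
    finally have s0: "(\<Sum>t\<in>UNIV. mpeval n f (x(i:=t))) = 0" .
    have "(\<Sum>t\<in>UNIV. mpeval n f (x(i:=t))) = (\<Sum>t\<in>UNIV. \<Sum>k<?q. t ^ k * ?M k x)"
      by (intro sum.cong refl decomp i)
    also have "\<dots> = (\<Sum>k<?q. ?M k x * (\<Sum>t\<in>UNIV. t ^ k))"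
      by (subst sum.swap) (simp add: sum_distrib_right mult.commute)
    also have "{..<?q} = insert (?q - 1) {..<?q - 1}" using q by auto
    also have "(\<Sum>k\<in>insert (?q - 1) {..<?q - 1}. ?M k x * (\<Sum>t\<in>UNIV. t ^ k)) = ?M (?q - 1) x * (\<Sum>t::'a\<in>UNIV. t ^ (?q - 1))"
      by (simp add: psum_small)
    also have "\<dots> = - ?M (?q - 1) x" using psum_top[where 'a='a] q by simp
    finally have "(\<Sum>t\<in>UNIV. mpeval n f (x(i:=t))) = - ?M (?q - 1) x" .
    thus ?thesis using s0 by (metis neg_equal_0_iff_equal)
  qed
  have slz: "sl n f i (?q - 1) e' = 0" for e'
    by (rule uniq[OF sl_reduced]) (use Mz in auto)
  have eR: "e \<in> red_exps ?q n" using L ne by (auto simp: is_LPP_def is_reduced_poly_def)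
  show ?thesis
  proof (rule ccontr)
    assume "\<not> e i < ?q - 1"
    moreover have "e i < ?q" using eR i by (auto simp: red_exps_def)
    ultimately have ei: "e i = ?q - 1" by simp
    have "e(i:=0) \<in> red_exps ?q n" using eR by (auto simp: red_exps_def card_gt_0_iff)
    with slz[of "e(i:=0)"] have "f (e(i:=?q - 1)) = 0" by (simp add: sl_def)
    moreover have "e(i:=?q - 1) = e" using ei by (metis fun_upd_triv)
    ultimately show False using ne by simp
  qed
qed

lemma tdeg_attained:
  fixes f :: "(nat \<Rightarrow> nat) \<Rightarrow> 'a::{field,finite}"
  assumes "tdeg n f > 0"
  shows "\<exists>e\<in>red_exps (card (UNIV::'a set)) n. f e \<noteq> 0 \<and> (\<Sum>i<n. e i) = tdeg n f"
proof -
  let ?S = "{(\<Sum>i<n. e i) | e. e \<in> red_exps (card (UNIV::'a set)) n \<and> f e \<noteq> 0}"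
  have fin: "finite ?S" by (rule finite_image_set) (simp add: red_exps_finite)
  have "tdeg n f \<in> insert 0 ?S" unfolding tdeg_def by (rule Max_in) (use fin in auto)
  thus ?thesis using assms by auto
qed

lemma tdeg_eqI:
  fixes g :: "(nat \<Rightarrow> nat) \<Rightarrow> 'a::{field,finite}"
  assumes "E \<in> red_exps (card (UNIV::'a set)) n" "g E \<noteq> 0" "(\<Sum>i<n. E i) = v"
    and "\<And>e. e \<in> red_exps (card (UNIV::'a set)) n \<Longrightarrow> g e \<noteq> 0 \<Longrightarrow> (\<Sum>i<n. e i) \<le> v"
  shows "tdeg n g = v"
proof -
  let ?S = "{(\<Sum>i<n. e i) | e. e \<in> red_exps (card (UNIV::'a set)) n \<and> g e \<noteq> 0}"
  have fin: "finite ?S" by (rule finite_image_set) (simp add: red_exps_finite)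
  show ?thesis unfolding tdeg_def
    by (rule Max_eqI) (use fin assms in auto)
qed

lemma step:
  fixes f :: "(nat \<Rightarrow> nat) \<Rightarrow> 'a::{field,finite}"
  assumes q: "card (UNIV::'a set) > 3" and L: "is_LPP (Suc m) f"
    and D: "tdeg (Suc m) f = Suc m * (card (UNIV::'a set) - 2)"
  shows "\<exists>g :: (nat \<Rightarrow> nat) \<Rightarrow> 'a. is_LPP m g \<and> tdeg m g = m * (card (UNIV::'a set) - 2)"
proof -
  let ?q = "card (UNIV::'a set)"
  have q2: "?q > 2" using q by simp
  obtain e where eR: "e \<in> red_exps ?q (Suc m)" and fe: "f e \<noteq> 0"
    and es: "(\<Sum>i<Suc m. e i) = Suc m * (?q - 2)"
    using tdeg_attained[of "Suc m" f] D q by auto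
  have ele: "e j \<le> ?q - 2" if "j < Suc m" for j
  proof -
    have "e j < ?q - 1" using bound[where e=e and i=j, OF q2 L that fe] .
    thus ?thesis by linarith
  qed
  have eE: "e j = ?q - 2" if "j < Suc m" for j
  proof (rule ccontr)
    assume "e j \<noteq> ?q - 2"
    hence "e j < ?q - 2" using ele[OF that] by simp
    hence "(\<Sum>i<Suc m. e i) < (\<Sum>i<Suc m. ?q - 2)"
      by (intro sum_strict_mono_ex1) (use ele that in auto)
    thus False using es by simp
  qed
  define E' where "E' = (\<lambda>j. if j < m then ?q - 2 else (0::nat))"
  have E'R: "E' \<in> red_exps ?q m" using q by (auto simp: E'_def red_exps_def)
  have E'e: "E'(m := ?q - 2) = e"
  proof
    fix j show "(E'(m := ?q - 2)) j = e j"
      using eE[of j] eR by (cases "j < Suc m") (auto simp: E'_def red_exps_def)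
  qed
  define b where "b k = f (E'(m:=k))" for k
  have "\<exists>a. (\<Sum>k<?q. b k * a ^ k) \<noteq> 0"
  proof (rule ccontr)
    assume "\<not> ?thesis"
    hence "b (?q - 2) = 0" by (intro uv_zero'[of b]) (use q in auto)
    thus False using fe E'e by (simp add: b_def)
  qed
  then obtain a where a: "(\<Sum>k<?q. b k * a ^ k) \<noteq> 0" by blast
  define g where "g = (\<lambda>e. \<Sum>k<?q. a ^ k * sl (Suc m) f m k e)"
  have gred: "is_reduced_poly m g"
  proof (unfold is_reduced_poly_def, intro allI impI)
    fix e assume "g e \<noteq> 0"
    then obtain k where "sl (Suc m) f m k e \<noteq> 0" unfolding g_def
      by (metis (no_types, lifting) mult_zero_right sum.neutral)
    thus "e \<in> red_exps ?q m" using sl_reduced_Suc[of m f k] by (auto simp: is_reduced_poly_def)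
  qed
  have geval: "mpeval m g x = mpeval (Suc m) f (x(m:=a))" for x
  proof -
    have "mpeval m g x = mpeval (Suc m) g x" using mpeval_Suc[OF gred] by simp
    also have "\<dots> = (\<Sum>k<?q. a ^ k * mpeval (Suc m) (sl (Suc m) f m k) x)"
      unfolding g_def by (rule mpeval_lin)
    also have "\<dots> = mpeval (Suc m) f (x(m:=a))" by (rule decomp[symmetric]) simp
    finally show ?thesis .
  qed
  have gL: "is_LPP m g"
    unfolding is_LPP_def
  proof (intro conjI gred allI impI)
    fix i x assume i: "i < m"
    have "(\<lambda>t. mpeval m g (x(i:=t))) = (\<lambda>t. mpeval (Suc m) f ((x(m:=a))(i:=t)))"
      using i by (simp add: geval fun_upd_twist)
    moreover have "bij (\<lambda>t. mpeval (Suc m) f ((x(m:=a))(i:=t)))"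
      using L i by (simp add: is_LPP_def)
    ultimately show "bij (\<lambda>t. mpeval m g (x(i:=t)))" by simp
  qed
  have gE: "g E' \<noteq> 0"
  proof -
    have "E' \<in> red_exps ?q (Suc m)" "E' m = 0" using E'R by (auto simp: red_exps_def E'_def less_Suc_eq)
    hence "g E' = (\<Sum>k<?q. b k * a ^ k)" unfolding g_def b_def
      by (intro sum.cong refl) (simp add: sl_def mult.commute)
    thus ?thesis using a by simp
  qed
  have "tdeg m g = m * (?q - 2)"
  proof (rule tdeg_eqI[of E' m g, OF E'R gE])
    show "(\<Sum>i<m. E' i) = m * (?q - 2)" by (simp add: E'_def)
    fix e assume eR: "e \<in> red_exps ?q m" and ge: "g e \<noteq> 0"
    then obtain k where "sl (Suc m) f m k e \<noteq> 0" unfolding g_def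
      by (metis (no_types, lifting) mult_zero_right sum.neutral)
    hence fk: "f (e(m:=k)) \<noteq> 0" by (simp add: sl_def split: if_splits)
    have "e j \<le> ?q - 2" if "j < m" for j
    proof -
      have jm: "j < Suc m" using that by simp
      have "(e(m:=k)) j < ?q - 1" using bound[where e="e(m:=k)" and i=j, OF q2 L jm fk] .
      moreover have "(e(m:=k)) j = e j" using that by simp
      ultimately show ?thesis by linarith
    qed
    hence "(\<Sum>i<m. e i) \<le> (\<Sum>i<m. ?q - 2)" by (intro sum_mono) simp
    thus "(\<Sum>i<m. e i) \<le> m * (?q - 2)" by simp
  qed
  with gL show ?thesis by blast
qed

theorem mainTheorem10:
  fixes f :: "(nat \<Rightarrow> nat) \<Rightarrow> 'a::{field,finite}"
    and n :: nat
  assumes "card (UNIV :: 'a set) > 3"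
    and "n \<ge> 1"
    and "is_LPP n f"
    and "tdeg n f = n * (card (UNIV :: 'a set) - 2)"
  shows "\<forall>m. 1 \<le> m \<and> m \<le> n \<longrightarrow>
           (\<exists>g :: (nat \<Rightarrow> nat) \<Rightarrow> 'a. is_LPP m g \<and> tdeg m g = m * (card (UNIV :: 'a set) - 2))"
proof (intro allI impI)
  fix m assume m: "1 \<le> m \<and> m \<le> n"
  have "\<exists>g :: (nat \<Rightarrow> nat) \<Rightarrow> 'a. is_LPP (n - d) g \<and> tdeg (n - d) g = (n - d) * (card (UNIV :: 'a set) - 2)"
    if "d < n" for d
    using that
  proof (induction d)
    case 0 thus ?case using assms by auto
  next
    case (Suc d)
    then obtain g :: "(nat \<Rightarrow> nat) \<Rightarrow> 'a" where g: "is_LPP (n - d) g"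
      "tdeg (n - d) g = (n - d) * (card (UNIV :: 'a set) - 2)" by auto
    have nd: "n - d = Suc (n - Suc d)" using Suc.prems by simp
    show ?case by (rule step) (use assms(1) g nd in auto)
  qed
  from this[of "n - m"] m show "\<exists>g :: (nat \<Rightarrow> nat) \<Rightarrow> 'a. is_LPP m g \<and> tdeg m g = m * (card (UNIV :: 'a set) - 2)"
    by auto
qed


end
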